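(* For every $n$, every linear 3-uniform hypergraph on $n$ vertices that contains neither $\mathcal{W}^3$ nor $F_7$ as an induced subgraph has at most $\frac{n^2}{9}$ edges; that is, $\mathrm{ex}_{\mathrm{lin,ind}}(n,\{\mathcal{W}^3,F_7\})\le \frac{n^2}{9}$. Moreover, equality holds for infinitely many $n$.
   Context: A 3-uniform hypergraph is linear if any two distinct edges share at most one vertex. $\mathrm{ex}_{\mathrm{lin,ind}}(n,\mathcal{G})$ is the maximum number of edges of an $n$-vertex linear 3-uniform hypergraph containing no member of $\mathcal{G}$ as an induced subgraph (a vertex subset whose induced subhypergraph is isomorphic to that member). Here $\mathcal{W}^3$ denotes the hypergraph on vertices $\{1,\dots,6\}$ with edges $\{1,2,3\},\{3,4,5\},\{5,6,1\}$ (a linear 3-cycle), and $F_7$ denotes the Fano plane: the hypergraph on the 7 nonzero vectors of $\mathbb{F}_2^3$ whose edges are the triples $\{x,y,z\}$ of distinct vectors with $x+y+z=0$. *)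

theory Defs
  imports Complex_Main
begin

definition hyp3 :: "'a set \<Rightarrow> 'a set set \<Rightarrow> bool" where
  "hyp3 V E \<longleftrightarrow> finite V \<and> (\<forall>e\<in>E. e \<subseteq> V \<and> card e = 3)"

definition linear_hyp :: "'a set set \<Rightarrow> bool" where
  "linear_hyp E \<longleftrightarrow> (\<forall>e\<in>E. \<forall>f\<in>E. e \<noteq> f \<longrightarrow> card (e \<inter> f) \<le> 1)"

definition induced_copy :: "'a set \<Rightarrow> 'a set set \<Rightarrow> 'b set \<Rightarrow> 'b set set \<Rightarrow> bool" where
  "induced_copy V E VH EH \<longleftrightarrow>
     (\<exists>S f. S \<subseteq> V \<and> bij_betw f VH S \<and>
        (\<forall>e. e \<subseteq> VH \<longrightarrow> (e \<in> EH \<longleftrightarrow> f ` e \<in> E)))"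

definition W3_V :: "nat set" where "W3_V = {1..6}"
definition W3_E :: "nat set set" where
  "W3_E = {{1,2,3},{3,4,5},{5,6,1}}"

text \<open>The Fano plane: nonzero vectors of F_2^3 encoded as 3-bit numbers 1..7,
  vector addition being bitwise xor.\<close>
definition F7_V :: "nat set" where "F7_V = {1..7}"
definition F7_E :: "nat set set" where
  "F7_E = {{x,y,z} | x y z. x \<in> F7_V \<and> y \<in> F7_V \<and> z \<in> F7_V \<and>
             x \<noteq> y \<and> y \<noteq> z \<and> x \<noteq> z \<and> xor (xor x y) z = 0}"

definition ex_lin_ind :: "nat \<Rightarrow> (nat set \<times> nat set set) set \<Rightarrow> nat" where
  "ex_lin_ind n Fs = Max {card E | E. hyp3 {..<n} E \<and> linear_hyp E \<and>
       (\<forall>(VH, EH)\<in>Fs. \<not> induced_copy {..<n} E VH EH)}"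

end

theory Submission
  imports Defs
begin
lemma xor_tab:
  "xor (1::nat) 2 = 3"
  "xor (1::nat) 3 = 2"
  "xor (1::nat) 4 = 5"
  "xor (1::nat) 5 = 4"
  "xor (1::nat) 6 = 7"
  "xor (1::nat) 7 = 6"
  "xor (2::nat) 1 = 3"
  "xor (2::nat) 3 = 1"
  "xor (2::nat) 4 = 6"
  "xor (2::nat) 5 = 7"
  "xor (2::nat) 6 = 4"
  "xor (2::nat) 7 = 5"
  "xor (3::nat) 1 = 2"
  "xor (3::nat) 2 = 1"
  "xor (3::nat) 4 = 7"
  "xor (3::nat) 5 = 6"
  "xor (3::nat) 6 = 5"
  "xor (3::nat) 7 = 4"
  "xor (4::nat) 1 = 5"
  "xor (4::nat) 2 = 6"
  "xor (4::nat) 3 = 7"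
  "xor (4::nat) 5 = 1"
  "xor (4::nat) 6 = 2"
  "xor (4::nat) 7 = 3"
  "xor (5::nat) 1 = 4"
  "xor (5::nat) 2 = 7"
  "xor (5::nat) 3 = 6"
  "xor (5::nat) 4 = 1"
  "xor (5::nat) 6 = 3"
  "xor (5::nat) 7 = 2"
  "xor (6::nat) 1 = 7"
  "xor (6::nat) 2 = 4"
  "xor (6::nat) 3 = 5"
  "xor (6::nat) 4 = 2"
  "xor (6::nat) 5 = 3"
  "xor (6::nat) 7 = 1"
  "xor (7::nat) 1 = 6"
  "xor (7::nat) 2 = 5"
  "xor (7::nat) 3 = 4"
  "xor (7::nat) 4 = 3"
  "xor (7::nat) 5 = 2"
  "xor (7::nat) 6 = 1"
  by simp_all

lemma xor_cancel: "xor x (xor x y) = (y::nat)"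
  by (simp add: xor.assoc[symmetric])

lemma F7_E_eq: "F7_E = {{1,2,3},{1,4,5},{1,6,7},{2,4,6},{2,5,7},{3,4,7},{3,5,6}}"
proof
  show "F7_E \<subseteq> {{1,2,3},{1,4,5},{1,6,7},{2,4,6},{2,5,7},{3,4,7},{3,5,6}}"
  proof
    fix e assume "e \<in> F7_E"
    then obtain x y z where e: "e = {x,y,z}" "x \<in> {1..7}" "y \<in> {1..7}" "z \<in> {1..7}" "x\<noteq>y" "y\<noteq>z" "x\<noteq>z"
      "xor (xor x y) z = (0::nat)" unfolding F7_E_def F7_V_def by blast
    have "z = xor x y" using e(8) by (metis xor_cancel xor.assoc xor.right_neutral)
    have xs: "x \<in> {1,2,3,4,5,6,7}" "y \<in> {1,2,3,4,5,6,7}" using e by auto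
    have "{x,y,xor x y} \<in> {{1,2,3},{1,4,5},{1,6,7},{2,4,6},{2,5,7},{3,4,7},{3,5,6}}"
      using xs e(5)
      apply (elim insertE emptyE)
      apply (simp_all only: xor_tab)
      apply (simp_all add: insert_commute)
      done
    then show "e \<in> {{1,2,3},{1,4,5},{1,6,7},{2,4,6},{2,5,7},{3,4,7},{3,5,6}}"
      unfolding e(1) \<open>z = xor x y\<close> .
  qed
  have w: "\<And>x y z. x \<in> {1..7} \<Longrightarrow> y \<in> {1..7} \<Longrightarrow> z \<in> {1..7} \<Longrightarrow> x\<noteq>y \<Longrightarrow> y\<noteq>z \<Longrightarrow> x\<noteq>z
     \<Longrightarrow> xor (xor x y) z = (0::nat) \<Longrightarrow> {x,y,z} \<in> F7_E"
    unfolding F7_E_def F7_V_def by blast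
  show "{{1,2,3},{1,4,5},{1,6,7},{2,4,6},{2,5,7},{3,4,7},{3,5,6}} \<subseteq> F7_E"
    proof -
      have l0: "{1,2,3} \<in> F7_E" unfolding F7_E_def F7_V_def by (rule CollectI, rule exI[of _ 1], rule exI[of _ 2], rule exI[of _ 3]) simp
      have l1: "{1,4,5} \<in> F7_E" unfolding F7_E_def F7_V_def by (rule CollectI, rule exI[of _ 1], rule exI[of _ 4], rule exI[of _ 5]) simp
      have l2: "{1,6,7} \<in> F7_E" unfolding F7_E_def F7_V_def by (rule CollectI, rule exI[of _ 1], rule exI[of _ 6], rule exI[of _ 7]) simp
      have l3: "{2,4,6} \<in> F7_E" unfolding F7_E_def F7_V_def by (rule CollectI, rule exI[of _ 2], rule exI[of _ 4], rule exI[of _ 6]) simp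
      have l4: "{2,5,7} \<in> F7_E" unfolding F7_E_def F7_V_def by (rule CollectI, rule exI[of _ 2], rule exI[of _ 5], rule exI[of _ 7]) simp
      have l5: "{3,4,7} \<in> F7_E" unfolding F7_E_def F7_V_def by (rule CollectI, rule exI[of _ 3], rule exI[of _ 4], rule exI[of _ 7]) simp
      have l6: "{3,5,6} \<in> F7_E" unfolding F7_E_def F7_V_def by (rule CollectI, rule exI[of _ 3], rule exI[of _ 5], rule exI[of _ 6]) simp
      show ?thesis using l0 l1 l2 l3 l4 l5 l6 by simp
    qed
qed

lemma lin2:
  assumes "hyp3 V E" "linear_hyp E" "e \<in> E" "f \<in> E" "u \<in> e" "u \<in> f" "w \<in> e" "w \<in> f" "u \<noteq> w"
  shows "e = f"
proof (rule ccontr)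
  assume "e \<noteq> f"
  then have "card (e \<inter> f) \<le> 1" using assms(2-4) unfolding linear_hyp_def by blast
  moreover have "finite (e \<inter> f)" using assms(1,3) unfolding hyp3_def
    by (meson finite_Int finite_subset)
  moreover have "{u,w} \<subseteq> e \<inter> f" using assms by auto
  ultimately have "card {u,w} \<le> 1" by (meson card_mono order_trans)
  then show False using assms(9) by simp
qed

lemma card3: "hyp3 V E \<Longrightarrow> e \<in> E \<Longrightarrow> card e = 3 \<and> e \<subseteq> V \<and> finite e"
  unfolding hyp3_def by (meson finite_subset)

lemma W3_copy:
  assumes H: "hyp3 V E" and L: "linear_hyp E"
    and inV: "{x1,x2,x3,x4,x5,x6} \<subseteq> V"
    and d: "distinct [x1,x2,x3,x4,x5,x6]"
    and E1: "{x1,x2,x3} \<in> E" and E2: "{x3,x4,x5} \<in> E" and E3: "{x5,x6,x1} \<in> E"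
    and N: "{x2,x4,x6} \<notin> E"
  shows "induced_copy V E W3_V W3_E"
proof -
  define S where "S = {x1,x2,x3,x4,x5,x6}"
  define f where "f = (\<lambda>i::nat. if i=1 then x1 else if i=2 then x2 else if i=3 then x3
     else if i=4 then x4 else if i=5 then x5 else x6)"
  have V6: "W3_V = {1,2,3,4,5,6}" by (auto simp: W3_V_def)
  have inj: "inj_on f W3_V" unfolding V6 inj_on_def f_def using d by auto
  have img: "f ` W3_V = S" unfolding V6 S_def f_def by auto
  have bij: "bij_betw f W3_V S" using inj img by (simp add: bij_betw_def)
  have key: "T = {x1,x2,x3} \<or> T = {x3,x4,x5} \<or> T = {x5,x6,x1}" if T: "T \<in> E" "T \<subseteq> S" for T
  proof (rule ccontr)
    assume nT: "\<not> ?thesis"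
    have c3: "card T = 3" "finite T" using card3[OF H T(1)] by auto
    have ex: "\<not> (u \<in> T \<and> w \<in> T)" if "u \<in> Q" "w \<in> Q" "Q \<in> E" "T \<noteq> Q" "u \<noteq> w" for u w Q
      using lin2[OF H L T(1) that(3), of u w] that by blast
    have small: False if "T \<subseteq> {u,w}" for u w
    proof -
      have "card T \<le> card {u,w}" using that by (simp add: card_mono)
      also have "\<dots> \<le> 2" by (simp add: card_insert_le_m1)
      finally show False using c3 by simp
    qed
    have "x1 \<notin> T"
    proof
      assume "x1 \<in> T"
      then have "x2 \<notin> T" "x3 \<notin> T" "x5 \<notin> T" "x6 \<notin> T"
        using ex[where u=x1 and w=x2 and Q="{x1,x2,x3}"] ex[where u=x1 and w=x3 and Q="{x1,x2,x3}"]
          ex[where u=x1 and w=x5 and Q="{x5,x6,x1}"] ex[where u=x1 and w=x6 and Q="{x5,x6,x1}"] nT E1 E3 d by auto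
      then have "T \<subseteq> {x1,x4}" using T(2) unfolding S_def by auto
      then show False by (rule small)
    qed
    moreover have "x3 \<notin> T"
    proof
      assume "x3 \<in> T"
      then have "x1 \<notin> T" "x2 \<notin> T" "x4 \<notin> T" "x5 \<notin> T"
        using ex[where u=x3 and w=x1 and Q="{x1,x2,x3}"] ex[where u=x3 and w=x2 and Q="{x1,x2,x3}"]
          ex[where u=x3 and w=x4 and Q="{x3,x4,x5}"] ex[where u=x3 and w=x5 and Q="{x3,x4,x5}"] nT E1 E2 d by auto
      then have "T \<subseteq> {x3,x6}" using T(2) unfolding S_def by auto
      then show False by (rule small)
    qed
    moreover have "x5 \<notin> T"
    proof
      assume "x5 \<in> T"
      then have "x3 \<notin> T" "x4 \<notin> T" "x6 \<notin> T" "x1 \<notin> T"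
        using ex[where u=x5 and w=x3 and Q="{x3,x4,x5}"] ex[where u=x5 and w=x4 and Q="{x3,x4,x5}"]
          ex[where u=x5 and w=x6 and Q="{x5,x6,x1}"] ex[where u=x5 and w=x1 and Q="{x5,x6,x1}"] nT E2 E3 d by auto
      then have "T \<subseteq> {x5,x2}" using T(2) unfolding S_def by auto
      then show False by (rule small)
    qed
    ultimately have sub: "T \<subseteq> {x2,x4,x6}" using T(2) unfolding S_def by auto
    have "card {x2,x4,x6} = 3" using d by auto
    then have "T = {x2,x4,x6}" using card_subset_eq[OF _ sub] c3 by simp
    then show False using N T(1) by simp
  qed
  have fe: "f ` {1,2,3} = {x1,x2,x3}" "f ` {3,4,5} = {x3,x4,x5}" "f ` {5,6,1} = {x5,x6,x1}"
    unfolding f_def by auto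
  have sub3: "{1,2,3} \<subseteq> W3_V" "{3,4,5} \<subseteq> W3_V" "{5,6,1} \<subseteq> W3_V" unfolding V6 by auto
  have "\<forall>e. e \<subseteq> W3_V \<longrightarrow> (e \<in> W3_E \<longleftrightarrow> f ` e \<in> E)"
  proof (intro allI impI iffI)
    fix e assume "e \<subseteq> W3_V" "e \<in> W3_E"
    then show "f ` e \<in> E" using fe E1 E2 E3 unfolding W3_E_def by auto
  next
    fix e assume e: "e \<subseteq> W3_V" "f ` e \<in> E"
    have "f ` e \<subseteq> S" using e(1) img by auto
    then have "f ` e = f ` {1,2,3} \<or> f ` e = f ` {3,4,5} \<or> f ` e = f ` {5,6,1}"
      using key[OF e(2)] fe by simp
    then have "e = {1,2,3} \<or> e = {3,4,5} \<or> e = {5,6,1}"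
      using inj_on_image_eq_iff[OF inj e(1)] sub3 by metis
    then show "e \<in> W3_E" unfolding W3_E_def by auto
  qed
  then show ?thesis unfolding induced_copy_def using bij inV S_def by blast
qed


lemma F7_copy:
  assumes H: "hyp3 V E" and L: "linear_hyp E"
    and inV: "{a,b,c,v,p,q,r} \<subseteq> V"
    and d: "distinct [a,b,c,v,p,q,r]"
    and E: "{a,b,c} \<in> E" "{a,v,p} \<in> E" "{a,q,r} \<in> E" "{b,v,q} \<in> E" "{b,p,r} \<in> E"
           "{c,v,r} \<in> E" "{c,p,q} \<in> E"
  shows "induced_copy V E F7_V F7_E"
proof -
  define S where "S = {a,b,c,v,p,q,r}"
  define Ls where "Ls = {{a,b,c},{a,v,p},{a,q,r},{b,v,q},{b,p,r},{c,v,r},{c,p,q}}"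
  define f where "f = (\<lambda>i::nat. if i=1 then a else if i=2 then b else if i=3 then c
     else if i=4 then v else if i=5 then p else if i=6 then q else r)"
  have V7: "F7_V = {1,2,3,4,5,6,7}" by (auto simp: F7_V_def)
  have inj: "inj_on f F7_V" unfolding V7 inj_on_def f_def using d by auto
  have img: "f ` F7_V = S" unfolding V7 S_def f_def by auto
  have bij: "bij_betw f F7_V S" using inj img by (simp add: bij_betw_def)
  have cover: "\<exists>Q\<in>Ls. u \<in> Q \<and> w \<in> Q" if "u \<in> S" "w \<in> S" "u \<noteq> w" for u w
    using that unfolding S_def Ls_def by auto
  have LsE: "Ls \<subseteq> E" unfolding Ls_def using E by auto
  have key: "T \<in> Ls" if T: "T \<in> E" "T \<subseteq> S" for T
  proof (rule ccontr)
    assume nT: "T \<notin> Ls"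
    have c3: "card T = 3" using card3[OF H T(1)] by auto
    then obtain t1 t2 t3 where "T = {t1,t2,t3}" "t1 \<noteq> t2" by (auto simp: card_3_iff)
    then have t: "t1 \<in> T" "t2 \<in> T" "t1 \<noteq> t2" by auto
    then obtain Q where Q: "Q \<in> Ls" "t1 \<in> Q" "t2 \<in> Q" using cover T(2) by blast
    have "T = Q" using lin2[OF H L T(1), of Q t1 t2] Q t LsE by auto
    then show False using nT Q by simp
  qed
  have fe: "f ` {1,2,3} = {a,b,c}" "f ` {1,4,5} = {a,v,p}" "f ` {1,6,7} = {a,q,r}"
    "f ` {2,4,6} = {b,v,q}" "f ` {2,5,7} = {b,p,r}" "f ` {3,4,7} = {c,v,r}" "f ` {3,5,6} = {c,p,q}"
    unfolding f_def by auto
  have sub: "{1,2,3} \<subseteq> F7_V" "{1,4,5} \<subseteq> F7_V" "{1,6,7} \<subseteq> F7_V" "{2,4,6} \<subseteq> F7_V"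
     "{2,5,7} \<subseteq> F7_V" "{3,4,7} \<subseteq> F7_V" "{3,5,6} \<subseteq> F7_V" unfolding V7 by auto
  have "\<forall>e. e \<subseteq> F7_V \<longrightarrow> (e \<in> F7_E \<longleftrightarrow> f ` e \<in> E)"
  proof (intro allI impI iffI)
    fix e assume "e \<subseteq> F7_V" "e \<in> F7_E"
    then show "f ` e \<in> E" using fe E unfolding F7_E_eq by auto
  next
    fix e assume e: "e \<subseteq> F7_V" "f ` e \<in> E"
    have "f ` e \<subseteq> S" using e(1) img by auto
    then have "f ` e \<in> Ls" using key[OF e(2)] by simp
    then have "f ` e = f ` {1,2,3} \<or> f ` e = f ` {1,4,5} \<or> f ` e = f ` {1,6,7} \<or>
       f ` e = f ` {2,4,6} \<or> f ` e = f ` {2,5,7} \<or> f ` e = f ` {3,4,7} \<or> f ` e = f ` {3,5,6}"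
      unfolding Ls_def fe by simp
    then have "e = {1,2,3} \<or> e = {1,4,5} \<or> e = {1,6,7} \<or> e = {2,4,6} \<or> e = {2,5,7}
       \<or> e = {3,4,7} \<or> e = {3,5,6}"
      using inj_on_image_eq_iff[OF inj e(1)] sub by metis
    then show "e \<in> F7_E" unfolding F7_E_eq by auto
  qed
  then show ?thesis unfolding induced_copy_def using bij inV S_def by blast
qed


lemma third:
  assumes "card f = 3" "x \<in> f" "u \<in> f" "x \<noteq> u"
  shows "\<exists>p. f = {x,u,p} \<and> p \<noteq> x \<and> p \<noteq> u"
proof -
  have fin: "finite f" using assms(1) by (metis card.infinite zero_neq_numeral)
  have "card (f - {x,u}) = 1" using assms fin by (simp add: card_Diff_subset)
  then obtain p where p: "f - {x,u} = {p}" by (meson card_1_singletonE)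
  then have "f = {x,u,p}" using assms(2,3) by blast
  moreover have "p \<noteq> x \<and> p \<noteq> u" using p by blast
  ultimately show ?thesis by blast
qed

lemma CS_sum:
  fixes g :: "'a \<Rightarrow> real"
  shows "(\<Sum>x\<in>A. g x)^2 \<le> real (card A) * (\<Sum>x\<in>A. (g x)^2)"
proof -
  have "0 \<le> (\<Sum>x\<in>A. \<Sum>y\<in>A. (g x - g y)^2)" by (intro sum_nonneg) auto
  also have "\<dots> = (\<Sum>x\<in>A. \<Sum>y\<in>A. (g x)^2 + (g y)^2 - 2 * (g x * g y))"
    by (simp add: power2_diff mult.assoc)
  also have "\<dots> = 2 * (real (card A) * (\<Sum>x\<in>A. (g x)^2)) - 2 * (\<Sum>x\<in>A. g x)^2"
    by (simp add: sum.distrib sum_subtractf sum_distrib_left sum_distrib_right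
        power2_eq_square mult.commute)
  finally show ?thesis by simp
qed

lemma double_count:
  fixes g :: "'a \<Rightarrow> real"
  assumes "finite V" "finite E" "\<forall>e\<in>E. e \<subseteq> V"
  shows "(\<Sum>v\<in>V. g v * real (card {f\<in>E. v \<in> f})) = (\<Sum>e\<in>E. \<Sum>v\<in>e. g v)"
proof -
  have "(\<Sum>v\<in>V. g v * real (card {f\<in>E. v \<in> f})) = (\<Sum>v\<in>V. \<Sum>f\<in>{f\<in>E. v \<in> f}. g v)"
    by (simp add: mult.commute)
  also have "\<dots> = (\<Sum>f\<in>E. \<Sum>v | v \<in> V \<and> v \<in> f. g v)"
    by (rule sum.swap_restrict[OF assms(1,2)])
  also have "\<dots> = (\<Sum>e\<in>E. \<Sum>v\<in>e. g v)"
  proof (rule sum.cong)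
    fix e assume "e \<in> E"
    then have "{v. v \<in> V \<and> v \<in> e} = e" using assms(3) by blast
    then show "(\<Sum>v | v \<in> V \<and> v \<in> e. g v) = (\<Sum>v\<in>e. g v)" by simp
  qed simp
  finally show ?thesis .
qed


lemma edge_bound:
  assumes H: "hyp3 V E" and L: "linear_hyp E"
    and NW: "\<not> induced_copy V E W3_V W3_E" and NF: "\<not> induced_copy V E F7_V F7_E"
    and e: "e \<in> E"
  shows "(\<Sum>x\<in>e. card {f\<in>E. x \<in> f}) \<le> card V"
proof -
  have finV: "finite V" using H unfolding hyp3_def by simp
  have finE: "finite E" using H finV unfolding hyp3_def
    by (meson Pow_iff finite_Pow_iff rev_finite_subset subsetI)
  obtain a b c where abc: "e = {a,b,c}" "a \<noteq> b" "b \<noteq> c" "a \<noteq> c"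
    using card3[OF H e] by (auto simp: card_3_iff)
  have eV: "e \<subseteq> V" using card3[OF H e] by simp
  define D where "D x = {f\<in>E. x \<in> f \<and> f \<noteq> e}" for x
  define N where "N x = (\<Union>f\<in>D x. f - {x})" for x
  have finD: "finite (D x)" for x unfolding D_def using finE by simp
  have cardN: "card (N x) + 2 = 2 * card {f\<in>E. x \<in> f}" if x: "x \<in> e" for x
  proof -
    have "card (N x) = (\<Sum>f\<in>D x. card (f - {x}))"
      unfolding N_def
    proof (rule card_UN_disjoint[OF finD])
      show "\<forall>f\<in>D x. finite (f - {x})" unfolding D_def using card3[OF H] by auto
      show "\<forall>f\<in>D x. \<forall>g\<in>D x. f \<noteq> g \<longrightarrow> (f - {x}) \<inter> (g - {x}) = {}"
        unfolding D_def using lin2[OF H L] by blast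
    qed
    also have "\<dots> = (\<Sum>f\<in>D x. 2)"
      by (rule sum.cong) (auto simp: D_def card3[OF H])
    also have "\<dots> = 2 * card (D x)" by simp
    finally have 1: "card (N x) = 2 * card (D x)" .
    have "{f\<in>E. x \<in> f} = insert e (D x)" unfolding D_def using e x by auto
    moreover have "e \<notin> D x" unfolding D_def by simp
    ultimately have "card {f\<in>E. x \<in> f} = Suc (card (D x))" using finD by simp
    then show ?thesis using 1 by simp
  qed
  have Nsub: "N x \<subseteq> V - e" if x: "x \<in> e" for x
  proof
    fix u assume "u \<in> N x"
    then obtain f where f: "f \<in> E" "x \<in> f" "f \<noteq> e" "u \<in> f" "u \<noteq> x"
      unfolding N_def D_def by blast
    have "u \<in> V" using card3[OF H f(1)] f(4) by blast
    moreover have "u \<notin> e" using lin2[OF H L f(1) e, of x u] f x by blast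
    ultimately show "u \<in> V - e" by simp
  qed
  have noF: "N a \<inter> N b \<inter> N c = {}"
  proof (rule ccontr)
    assume "N a \<inter> N b \<inter> N c \<noteq> {}"
    then obtain u where u: "u \<in> N a" "u \<in> N b" "u \<in> N c" by blast
    obtain f where f: "f \<in> E" "a \<in> f" "f \<noteq> e" "u \<in> f" "u \<noteq> a"
      using u(1) unfolding N_def D_def by blast
    obtain g where g: "g \<in> E" "b \<in> g" "g \<noteq> e" "u \<in> g" "u \<noteq> b"
      using u(2) unfolding N_def D_def by blast
    obtain h where h: "h \<in> E" "c \<in> h" "h \<noteq> e" "u \<in> h" "u \<noteq> c"
      using u(3) unfolding N_def D_def by blast
    obtain p where p: "f = {a,u,p}" "p \<noteq> a" "p \<noteq> u"
      using third[of f a u] card3[OF H f(1)] f by auto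
    obtain q where q: "g = {b,u,q}" "q \<noteq> b" "q \<noteq> u"
      using third[of g b u] card3[OF H g(1)] g by auto
    obtain r where r: "h = {c,u,r}" "r \<noteq> c" "r \<noteq> u"
      using third[of h c u] card3[OF H h(1)] h by auto
    have ae: "a \<in> e" "b \<in> e" "c \<in> e" using abc by auto
    have out: "z \<notin> e" if "z \<in> Q" "Q \<in> E" "y \<in> Q" "y \<in> e" "z \<noteq> y" "Q \<noteq> e" for z y Q
      using lin2[OF H L that(2) e, of y z] that by blast
    have uo: "u \<notin> e" using out[of u f a] f ae by blast
    have po: "p \<notin> e" using out[of p f a] f ae p by blast
    have qo: "q \<notin> e" using out[of q g b] g ae q by blast
    have ro: "r \<notin> e" using out[of r h c] h ae r by blast
    have bf: "b \<notin> f" using out[of b f a] f ae abc by blast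
    have cg: "c \<notin> g" using out[of c g b] g ae abc by blast
    have ch: "c \<notin> f" using out[of c f a] f ae abc by blast
    have fg: "f \<noteq> g" using bf g by blast
    have gh: "g \<noteq> h" using cg h by blast
    have fh: "f \<noteq> h" using ch h by blast
    have pq: "p \<noteq> q" using lin2[OF H L f(1) g(1), of p u] p q fg by auto
    have pr: "p \<noteq> r" using lin2[OF H L f(1) h(1), of p u] p r fh by auto
    have qr: "q \<noteq> r" using lin2[OF H L g(1) h(1), of q u] q r gh by auto
    have o1: "u \<noteq> a" "u \<noteq> b" "u \<noteq> c" using uo abc(1) by simp_all
    have o2: "p \<noteq> a" "p \<noteq> b" "p \<noteq> c" using po abc(1) by simp_all
    have o3: "q \<noteq> a" "q \<noteq> b" "q \<noteq> c" using qo abc(1) by simp_all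
    have o4: "r \<noteq> a" "r \<noteq> b" "r \<noteq> c" using ro abc(1) by simp_all
    note F = o1 o2 o3 o4 abc(2-4) pq pr qr p(3) q(3) r(3)
    have dist: "distinct [a,b,c,u,p,q,r]"
      by (simp add: F F[THEN not_sym])
    have inV: "{a,b,c,u,p,q,r} \<subseteq> V"
    proof -
      have "f \<subseteq> V" "g \<subseteq> V" "h \<subseteq> V" using card3[OF H f(1)] card3[OF H g(1)] card3[OF H h(1)] by simp_all
      then show ?thesis using eV unfolding abc(1) p(1) q(1) r(1) by simp
    qed
    have eE: "{a,c,b} \<in> E" "{a,b,c} \<in> E" "{b,a,c} \<in> E"
      using e abc(1) by (simp_all add: insert_commute)
    have gE: "{b,q,u} \<in> E" "{u,q,b} \<in> E" "{b,u,q} \<in> E" using g(1) q(1) by (simp_all add: insert_commute)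
    have fE: "{u,p,a} \<in> E" "{a,u,p} \<in> E" using f(1) p(1) by (simp_all add: insert_commute)
    have hE: "{c,r,u} \<in> E" "{c,u,r} \<in> E" using h(1) r(1) by (simp_all add: insert_commute)
    have n1: "{c,q,p} \<in> E"
    proof (rule ccontr)
      assume nn: "{c,q,p} \<notin> E"
      have s1: "{a,c,b,q,u,p} \<subseteq> V" using inV by simp
      have s2: "distinct [a,c,b,q,u,p]" by (simp add: F F[THEN not_sym])
      have "induced_copy V E W3_V W3_E"
        by (rule W3_copy[OF H L s1 s2 eE(1) gE(1) fE(1) nn])
      then show False using NW by simp
    qed
    have n2: "{b,r,p} \<in> E"
    proof (rule ccontr)
      assume nn: "{b,r,p} \<notin> E"
      have s1: "{a,b,c,r,u,p} \<subseteq> V" using inV by simp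
      have s2: "distinct [a,b,c,r,u,p]" by (simp add: F F[THEN not_sym])
      have "induced_copy V E W3_V W3_E"
        by (rule W3_copy[OF H L s1 s2 eE(2) hE(1) fE(1) nn])
      then show False using NW by simp
    qed
    have n3: "{a,r,q} \<in> E"
    proof (rule ccontr)
      assume nn: "{a,r,q} \<notin> E"
      have s1: "{b,a,c,r,u,q} \<subseteq> V" using inV by simp
      have s2: "distinct [b,a,c,r,u,q]" by (simp add: F F[THEN not_sym])
      have "induced_copy V E W3_V W3_E"
        by (rule W3_copy[OF H L s1 s2 eE(3) hE(1) gE(2) nn])
      then show False using NW by simp
    qed
    have m1: "{c,p,q} \<in> E" using n1 by (metis insert_commute)
    have m2: "{b,p,r} \<in> E" using n2 by (metis insert_commute)
    have m3: "{a,q,r} \<in> E" using n3 by (metis insert_commute)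
    have "induced_copy V E F7_V F7_E"
      by (rule F7_copy[OF H L inV dist eE(2) fE(2) m3 gE(3) m2 hE(2) m1])
    then show False using NF by simp
  qed
  have finN: "finite (N x)" if "x \<in> e" for x
    using Nsub[OF that] finV by (meson finite_Diff finite_subset)
  have ae: "a \<in> e" "b \<in> e" "c \<in> e" using abc by auto
  have u1: "card (N a \<union> N b) + card (N a \<inter> N b) = card (N a) + card (N b)"
    using card_Un_Int[OF finN[OF ae(1)] finN[OF ae(2)]] by simp
  have u2: "card ((N a \<inter> N b) \<union> N c) + card ((N a \<inter> N b) \<inter> N c) = card (N a \<inter> N b) + card (N c)"
    using card_Un_Int[OF finite_Int[OF disjI1, OF finN[OF ae(1)]] finN[OF ae(3)], of "N b"] by simp
  have finVe: "finite (V - e)" using finV by simp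
  have b1: "card (N a \<union> N b) \<le> card (V - e)"
    by (rule card_mono[OF finVe]) (use Nsub ae in blast)
  have b2: "card ((N a \<inter> N b) \<union> N c) \<le> card (V - e)"
    by (rule card_mono[OF finVe]) (use Nsub ae in blast)
  have cV: "card (V - e) + 3 = card V"
    using card_Diff_subset[OF _ eV] card3[OF H e] card_mono[OF finV eV] by auto
  have sumE: "(\<Sum>x\<in>e. card {f\<in>E. x \<in> f}) = card {f\<in>E. a \<in> f} + card {f\<in>E. b \<in> f} + card {f\<in>E. c \<in> f}"
    using abc by simp
  show ?thesis
    using sumE cV b1 b2 u1 u2 noF cardN[OF ae(1)] cardN[OF ae(2)] cardN[OF ae(3)] by simp
qed


lemma part1:
  assumes H: "hyp3 V E" and L: "linear_hyp E"
    and NW: "\<not> induced_copy V E W3_V W3_E" and NF: "\<not> induced_copy V E F7_V F7_E"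
  shows "real (card E) \<le> real (card V) ^ 2 / 9"
proof -
  have finV: "finite V" using H unfolding hyp3_def by simp
  have finE: "finite E" using H finV unfolding hyp3_def
    by (meson Pow_iff finite_Pow_iff rev_finite_subset subsetI)
  have sub: "\<forall>e\<in>E. e \<subseteq> V" using H unfolding hyp3_def by simp
  define d where "d v = real (card {f\<in>E. v \<in> f})" for v
  define n where "n = real (card V)"
  define m where "m = real (card E)"
  have S1: "(\<Sum>v\<in>V. d v) = 3 * m"
  proof -
    have "(\<Sum>v\<in>V. 1 * d v) = (\<Sum>e\<in>E. \<Sum>v\<in>e. (1::real))"
      unfolding d_def by (rule double_count[OF finV finE sub])
    also have "\<dots> = (\<Sum>e\<in>E. 3)"
      by (rule sum.cong) (auto simp: card3[OF H])
    finally show ?thesis unfolding m_def by simp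
  qed
  have S2: "(\<Sum>v\<in>V. (d v)^2) \<le> m * n"
  proof -
    have "(\<Sum>v\<in>V. (d v)^2) = (\<Sum>v\<in>V. d v * d v)" by (simp add: power2_eq_square)
    also have "\<dots> = (\<Sum>e\<in>E. \<Sum>v\<in>e. d v)"
      unfolding d_def by (rule double_count[OF finV finE sub])
    also have "\<dots> \<le> (\<Sum>e\<in>E. n)"
    proof (rule sum_mono)
      fix e assume "e \<in> E"
      have "(\<Sum>v\<in>e. d v) = real (\<Sum>x\<in>e. card {f\<in>E. x \<in> f})" unfolding d_def by simp
      also have "\<dots> \<le> n" unfolding n_def using edge_bound[OF H L NW NF \<open>e \<in> E\<close>] by linarith
      finally show "(\<Sum>v\<in>e. d v) \<le> n" .
    qed
    also have "\<dots> = m * n" unfolding m_def by simp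
    finally show ?thesis .
  qed
  have CS: "(\<Sum>v\<in>V. d v)^2 \<le> n * (\<Sum>v\<in>V. (d v)^2)" unfolding n_def by (rule CS_sum)
  have "9 * m^2 \<le> n * (m * n)"
  proof -
    have "9 * m^2 = (3*m)^2" by (simp add: power2_eq_square)
    also have "\<dots> \<le> n * (\<Sum>v\<in>V. (d v)^2)" using CS S1 by simp
    also have "\<dots> \<le> n * (m * n)" using S2 n_def by (simp add: mult_left_mono)
    finally show ?thesis .
  qed
  then have "m * (9 * m) \<le> m * (n^2)" by (simp add: power2_eq_square algebra_simps)
  moreover have "m \<ge> 0" unfolding m_def by simp
  ultimately have "m = 0 \<or> 9 * m \<le> n^2" by (metis mult_le_cancel_left_pos order_le_less)
  then have "m \<le> n^2 / 9" by auto
  then show ?thesis unfolding m_def n_def .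
qed


lemma xor_lt: "(x::nat) < 2^k \<Longrightarrow> y < 2^k \<Longrightarrow> xor x y < 2^k"
  by (metis take_bit_nat_eq_self_iff take_bit_xor take_bit_nat_less_exp)

lemma xor_left_inj[simp]: "xor x y = xor x y' \<longleftrightarrow> y = (y'::nat)"
  by (metis xor_cancel)
lemma xor_right_inj[simp]: "xor x y = xor x' y \<longleftrightarrow> x = (x'::nat)"
  by (metis xor_cancel xor.commute)
lemma xor3_iff: "xor (xor a b) c = 0 \<longleftrightarrow> c = xor a (b::nat)"
  by (metis xor_cancel xor.assoc xor.comm_neutral xor_self_eq)

definition valf :: "nat \<Rightarrow> nat \<Rightarrow> nat \<Rightarrow> nat" where
  "valf x y c = (if c = 0 then x else if c = 1 then y else xor x y)"
definition edge0 :: "nat \<Rightarrow> nat \<Rightarrow> nat \<Rightarrow> nat set" where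
  "edge0 m x y = {x, m + y, 2*m + xor x y}"
definition E0 :: "nat \<Rightarrow> nat set set" where
  "E0 m = (\<lambda>(x,y). edge0 m x y) ` ({..<m} \<times> {..<m})"

context
  fixes k m :: nat
  assumes mk: "m = 2^k"
begin

lemma m_pos: "m > 0" using mk by simp

lemma xor_lt_m: "x < m \<Longrightarrow> y < m \<Longrightarrow> xor x y < m"
  using xor_lt mk by simp

lemma mem_char:
  assumes "x < m" "y < m"
  shows "u \<in> edge0 m x y \<longleftrightarrow> u < 3*m \<and> u mod m = valf x y (u div m)"
proof
  have z: "xor x y < m" using xor_lt_m assms by simp
  assume "u \<in> edge0 m x y"
  then have "u = x \<or> u = m + y \<or> u = 2*m + xor x y" unfolding edge0_def by simp
  then show "u < 3*m \<and> u mod m = valf x y (u div m)"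
  proof (elim disjE)
    assume "u = x" then show ?thesis using assms by (simp add: valf_def)
  next
    assume "u = m + y" then show ?thesis using assms m_pos by (simp add: valf_def)
  next
    assume u: "u = 2*m + xor x y"
    have "u div m = 2" unfolding u using z m_pos by simp
    moreover have "u mod m = xor x y" unfolding u using z by simp
    ultimately show ?thesis using u z by (simp add: valf_def)
  qed
next
  assume u: "u < 3*m \<and> u mod m = valf x y (u div m)"
  have d: "u div m < 3" using u m_pos by (simp add: div_less_iff_less_mult)
  have du: "u = (u div m) * m + u mod m" by simp
  have "u div m = 0 \<or> u div m = 1 \<or> u div m = 2" using d by auto
  then show "u \<in> edge0 m x y"
  proof (elim disjE)
    assume "u div m = 0" then show ?thesis using u du unfolding edge0_def valf_def by simp
  next
    assume "u div m = 1" then show ?thesis using u du unfolding edge0_def valf_def by simp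
  next
    assume h: "u div m = 2"
    then have "u = 2 * m + xor x y" using u du unfolding valf_def by simp
    then show ?thesis unfolding edge0_def by simp
  qed
qed

lemma E0_elim:
  assumes "e \<in> E0 m"
  obtains x y where "x < m" "y < m" "e = edge0 m x y"
  using assms unfolding E0_def by auto

lemma same_col:
  assumes "e \<in> E0 m" "u \<in> e" "w \<in> e" "u div m = w div m"
  shows "u = w"
proof -
  obtain x y where xy: "x < m" "y < m" "e = edge0 m x y" using assms(1) by (rule E0_elim)
  have "u mod m = w mod m" using mem_char[OF xy(1,2)] assms xy(3) by simp
  then show ?thesis using assms(4) by (metis div_mult_mod_eq)
qed

lemma col_lt: "e \<in> E0 m \<Longrightarrow> u \<in> e \<Longrightarrow> u < 3*m"
  by (metis E0_elim mem_char)

lemma col_lt3: "u < 3*m \<Longrightarrow> u div m < 3"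
  using m_pos by (simp add: div_less_iff_less_mult)

lemma edge_xor:
  assumes "e \<in> E0 m" "u \<in> e" "w \<in> e" "z \<in> e" "u \<noteq> w" "w \<noteq> z" "u \<noteq> z"
  shows "xor (xor (u mod m) (w mod m)) (z mod m) = 0"
proof -
  obtain x y where xy: "x < m" "y < m" "e = edge0 m x y" using assms(1) by (rule E0_elim)
  have v: "u mod m = valf x y (u div m)" "w mod m = valf x y (w div m)" "z mod m = valf x y (z div m)"
    using mem_char[OF xy(1,2)] assms xy(3) by auto
  have dd: "u div m \<noteq> w div m" "w div m \<noteq> z div m" "u div m \<noteq> z div m"
    using same_col[OF assms(1)] assms by blast+
  have l: "u div m < 3" "w div m < 3" "z div m < 3"
    using col_lt3 col_lt[OF assms(1)] assms(2-4) by blast+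
  show ?thesis unfolding v using dd l
    by (auto simp: valf_def xor.assoc xor.left_commute xor.commute xor_cancel xor_self_eq
        less_Suc_eq numeral_eq_Suc)
qed

lemma edge_intro0:
  assumes "u < 3*m" "w < 3*m" "z < 3*m" "u div m = 0" "w div m = 1" "z div m = 2"
    "z mod m = xor (u mod m) (w mod m)"
  shows "{u,w,z} \<in> E0 m"
proof -
  have "u = u mod m" "w = m + w mod m" "z = 2*m + z mod m"
    using assms(4-6) by (metis add_0 div_mult_mod_eq mult_1 mult_zero_left mult.commute)+
  then have "{u,w,z} = edge0 m (u mod m) (w mod m)" unfolding edge0_def using assms(7) by simp
  moreover have "u mod m < m" "w mod m < m" using m_pos by simp_all
  ultimately show ?thesis unfolding E0_def by force
qed

lemma xor3_perm:
  assumes "xor (xor a b) c = (0::nat)"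
  shows "c = xor a b" "c = xor b a" "b = xor a c" "b = xor c a" "a = xor b c" "a = xor c b"
  using assms by (metis xor3_iff xor_cancel xor.commute)+

lemma edge_intro:
  assumes "u < 3*m" "w < 3*m" "z < 3*m" "u div m \<noteq> w div m" "w div m \<noteq> z div m" "u div m \<noteq> z div m"
    "xor (xor (u mod m) (w mod m)) (z mod m) = 0"
  shows "{u,w,z} \<in> E0 m"
proof -
  note X = xor3_perm[OF assms(7)]
  have l: "u div m < 3" "w div m < 3" "z div m < 3" using col_lt3 assms by blast+
  have "u div m = 0 \<or> u div m = 1 \<or> u div m = 2" "w div m = 0 \<or> w div m = 1 \<or> w div m = 2"
    "z div m = 0 \<or> z div m = 1 \<or> z div m = 2" using l by auto
  then consider "u div m = 0" "w div m = 1" "z div m = 2" | "u div m = 0" "w div m = 2" "z div m = 1" | "u div m = 1" "w div m = 0" "z div m = 2" | "u div m = 1" "w div m = 2" "z div m = 0" | "u div m = 2" "w div m = 0" "z div m = 1" | "u div m = 2" "w div m = 1" "z div m = 0"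
    using assms(4-6) by metis
  then show ?thesis
  proof cases
    case 1
    have "{u,w,z} \<in> E0 m" using assms 1 X by (intro edge_intro0) assumption+
    moreover have "{u,w,z} = {u,w,z}" by blast
    ultimately show ?thesis by simp
  next
    case 2
    have "{u,z,w} \<in> E0 m" using assms 2 X by (intro edge_intro0) assumption+
    moreover have "{u,z,w} = {u,w,z}" by blast
    ultimately show ?thesis by simp
  next
    case 3
    have "{w,u,z} \<in> E0 m" using assms 3 X by (intro edge_intro0) assumption+
    moreover have "{w,u,z} = {u,w,z}" by blast
    ultimately show ?thesis by simp
  next
    case 4
    have "{z,u,w} \<in> E0 m" using assms 4 X by (intro edge_intro0) assumption+
    moreover have "{z,u,w} = {u,w,z}" by blast
    ultimately show ?thesis by simp
  next
    case 5
    have "{w,z,u} \<in> E0 m" using assms 5 X by (intro edge_intro0) assumption+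
    moreover have "{w,z,u} = {u,w,z}" by blast
    ultimately show ?thesis by simp
  next
    case 6
    have "{z,w,u} \<in> E0 m" using assms 6 X by (intro edge_intro0) assumption+
    moreover have "{z,w,u} = {u,w,z}" by blast
    ultimately show ?thesis by simp
  qed
qed

end

context
  fixes k m :: nat
  assumes mk: "m = 2^k"
begin

lemmas mp = m_pos[OF mk]
lemmas mc = mem_char[OF mk]
lemmas sc = same_col[OF mk]
lemmas cl = col_lt[OF mk]
lemmas cl3 = col_lt3[OF mk]
lemmas ex = edge_xor[OF mk]
lemmas ei = edge_intro[OF mk]

lemma valf_inj:
  assumes "a \<noteq> b" "a < 3" "b < (3::nat)" "valf x y a = valf x' y' a" "valf x y b = valf x' y' b"
  shows "x = x' \<and> y = y'"
  using assms unfolding valf_def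
  by (auto simp: less_Suc_eq numeral_eq_Suc split: if_splits)

lemma E0_hyp3: "hyp3 {..<3*m} (E0 m)"
  unfolding hyp3_def
proof (intro conjI ballI)
  fix e assume e: "e \<in> E0 m"
  show "e \<subseteq> {..<3*m}" using cl[OF e] by auto
  obtain x y where xy: "x < m" "y < m" "e = edge0 m x y" using e by (rule E0_elim[OF mk])
  have "xor x y < m" using xor_lt_m[OF mk] xy by simp
  then show "card e = 3" unfolding xy(3) edge0_def using xy by simp
qed simp

lemma E0_lin: "linear_hyp (E0 m)"
  unfolding linear_hyp_def
proof (intro ballI impI)
  fix e f assume e: "e \<in> E0 m" and f: "f \<in> E0 m" and ne: "e \<noteq> f"
  obtain x y where xy: "x < m" "y < m" "e = edge0 m x y" using e by (rule E0_elim[OF mk])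
  obtain x' y' where xy': "x' < m" "y' < m" "f = edge0 m x' y'" using f by (rule E0_elim[OF mk])
  have fin: "finite (e \<inter> f)" unfolding xy(3) edge0_def by simp
  have "\<forall>u\<in>e \<inter> f. \<forall>w\<in>e \<inter> f. u = w"
  proof (intro ballI, rule ccontr)
    fix u w assume u: "u \<in> e \<inter> f" and w: "w \<in> e \<inter> f" and uw: "u \<noteq> w"
    have d: "u div m \<noteq> w div m" using sc[OF e] u w uw by blast
    have l: "u div m < 3" "w div m < 3" using cl3 cl[OF e] u w by blast+
    have q: "u mod m = valf x y (u div m)" "u mod m = valf x' y' (u div m)"
      "w mod m = valf x y (w div m)" "w mod m = valf x' y' (w div m)"
      using mc[OF xy(1,2)] mc[OF xy'(1,2)] u w xy(3) xy'(3) by auto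
    have q1: "valf x y (u div m) = valf x' y' (u div m)" using q(1,2) by (rule trans[OF sym])
    have q2: "valf x y (w div m) = valf x' y' (w div m)" using q(3,4) by (rule trans[OF sym])
    have "x = x' \<and> y = y'" by (rule valf_inj[OF d l q1 q2])
    then show False using ne xy(3) xy'(3) by simp
  qed
  then show "card (e \<inter> f) \<le> 1" using card_le_Suc0_iff_eq[OF fin] by simp
qed

lemma E0_card: "card (E0 m) = m^2"
proof -
  have "inj_on (\<lambda>(x,y). edge0 m x y) ({..<m} \<times> {..<m})"
  proof (rule inj_onI, clarsimp)
    fix x y x' y' assume a: "x < m" "y < m" "x' < m" "y' < m" "edge0 m x y = edge0 m x' y'"
    have "x \<in> edge0 m x' y'" "m + y \<in> edge0 m x' y'" using a(5) unfolding edge0_def by auto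
    then have "x mod m = valf x' y' (x div m)" "(m+y) mod m = valf x' y' ((m+y) div m)"
      using mc[OF a(3,4)] by auto
    then show "x = x' \<and> y = y'" using a mp by (simp add: valf_def)
  qed
  then show ?thesis unfolding E0_def by (simp add: card_image power2_eq_square)
qed

lemma E0_noW: "\<not> induced_copy {..<3*m} (E0 m) W3_V W3_E"
proof
  assume "induced_copy {..<3*m} (E0 m) W3_V W3_E"
  then obtain S f where S: "S \<subseteq> {..<3*m}" "bij_betw f W3_V S"
    and iff: "\<forall>e. e \<subseteq> W3_V \<longrightarrow> (e \<in> W3_E \<longleftrightarrow> f ` e \<in> E0 m)"
    unfolding induced_copy_def by blast
  have V6: "W3_V = {1,2,3,4,5,6}" by (auto simp: W3_V_def)
  have inj: "inj_on f W3_V" using S(2) by (simp add: bij_betw_def)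
  have E1: "{f 1, f 2, f 3} \<in> E0 m" using iff[rule_format, of "{1,2,3}"] unfolding V6 W3_E_def by simp
  have E2: "{f 3, f 4, f 5} \<in> E0 m" using iff[rule_format, of "{3,4,5}"] unfolding V6 W3_E_def by simp
  have E3: "{f 5, f 6, f 1} \<in> E0 m" using iff[rule_format, of "{5,6,1}"] unfolding V6 W3_E_def by simp
  have n246: "{2,4,6::nat} \<notin> W3_E" unfolding W3_E_def
    apply simp
    apply (intro conjI notI)
    apply (drule equalityD1, simp)+
    done
  have N: "{f 2, f 4, f 6} \<notin> E0 m" using iff[rule_format, of "{2,4,6}"] n246 unfolding V6 by simp
  have dist: "f i \<noteq> f j" if "i \<in> W3_V" "j \<in> W3_V" "i \<noteq> j" for i j
    using inj that by (meson inj_on_contraD)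
  have d12: "f 1 \<noteq> f 2" and d13: "f 1 \<noteq> f 3" and d23: "f 2 \<noteq> f 3" and d34: "f 3 \<noteq> f 4"
    and d35: "f 3 \<noteq> f 5" and d45: "f 4 \<noteq> f 5" and d56: "f 5 \<noteq> f 6" and d15: "f 1 \<noteq> f 5"
    and d16: "f 1 \<noteq> f 6" and d24: "f 2 \<noteq> f 4" and d26: "f 2 \<noteq> f 6" and d46: "f 4 \<noteq> f 6"
    using dist unfolding V6 by auto
  define c where "c i = f i div m" for i
  have c1: "c 1 \<noteq> c 2" "c 1 \<noteq> c 3" "c 2 \<noteq> c 3" unfolding c_def by (metis sc[OF E1, of "f 1" "f 2"] sc[OF E1, of "f 1" "f 3"] sc[OF E1, of "f 2" "f 3"] d12 d13 d23 insertCI)+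
  have c2: "c 3 \<noteq> c 4" "c 3 \<noteq> c 5" "c 4 \<noteq> c 5" unfolding c_def by (metis sc[OF E2, of "f 3" "f 4"] sc[OF E2, of "f 3" "f 5"] sc[OF E2, of "f 4" "f 5"] d34 d35 d45 insertCI)+
  have c3: "c 5 \<noteq> c 6" "c 5 \<noteq> c 1" "c 6 \<noteq> c 1" unfolding c_def by (metis sc[OF E3, of "f 5" "f 6"] sc[OF E3, of "f 1" "f 5"] sc[OF E3, of "f 1" "f 6"] d56 d15 d16 insertCI)+
  have lt: "f 1 < 3*m" "f 2 < 3*m" "f 3 < 3*m" "f 4 < 3*m" "f 5 < 3*m" "f 6 < 3*m"
    using cl[OF E1] cl[OF E2] cl[OF E3] by auto
  have l: "c 1 < 3" "c 2 < 3" "c 3 < 3" "c 4 < 3" "c 5 < 3" "c 6 < 3"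
    using cl3 lt unfolding c_def by auto
  have cc: "c 2 \<noteq> c 4" "c 4 \<noteq> c 6" "c 2 \<noteq> c 6" using c1 c2 c3 l by linarith+
  have x1: "xor (xor (f 1 mod m) (f 2 mod m)) (f 3 mod m) = 0" by (rule ex[OF E1]) (use d12 d13 d23 in simp_all)
  have x2: "xor (xor (f 3 mod m) (f 4 mod m)) (f 5 mod m) = 0" by (rule ex[OF E2]) (use d34 d35 d45 in simp_all)
  have x3: "xor (xor (f 5 mod m) (f 6 mod m)) (f 1 mod m) = 0" by (rule ex[OF E3]) (use d56 d16[THEN not_sym] d15[THEN not_sym] in simp_all)
  have "xor (xor (f 2 mod m) (f 4 mod m)) (f 6 mod m) = 0"
  proof -
    have a: "f 3 mod m = xor (f 1 mod m) (f 2 mod m)" using x1 by (simp add: xor3_iff)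
    have b: "f 5 mod m = xor (f 3 mod m) (f 4 mod m)" using x2 by (simp add: xor3_iff)
    have c: "f 1 mod m = xor (f 5 mod m) (f 6 mod m)" using x3 by (simp add: xor3_iff)
    have "f 6 mod m = xor (f 5 mod m) (f 1 mod m)" using c xor_cancel by metis
    also have "\<dots> = xor (f 2 mod m) (f 4 mod m)" unfolding b a
      by (simp add: xor.assoc xor.left_commute xor.commute xor_cancel)
    finally show ?thesis by (simp add: xor3_iff)
  qed
  then have "{f 2, f 4, f 6} \<in> E0 m" using ei lt cc unfolding c_def by blast
  then show False using N by simp
qed

lemma E0_noF: "\<not> induced_copy {..<3*m} (E0 m) F7_V F7_E"
proof
  assume "induced_copy {..<3*m} (E0 m) F7_V F7_E"
  then obtain S f where S: "S \<subseteq> {..<3*m}" "bij_betw f F7_V S"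
    and iff: "\<forall>e. e \<subseteq> F7_V \<longrightarrow> (e \<in> F7_E \<longleftrightarrow> f ` e \<in> E0 m)"
    unfolding induced_copy_def by blast
  have V7: "F7_V = {1,2,3,4,5,6,7}" by (auto simp: F7_V_def)
  have inj: "inj_on f F7_V" using S(2) by (simp add: bij_betw_def)
  have E1: "{f 1, f 2, f 3} \<in> E0 m" using iff[rule_format, of "{1,2,3}"] unfolding V7 F7_E_eq by simp
  have E2: "{f 1, f 4, f 5} \<in> E0 m" using iff[rule_format, of "{1,4,5}"] unfolding V7 F7_E_eq by simp
  have E3: "{f 2, f 4, f 6} \<in> E0 m" using iff[rule_format, of "{2,4,6}"] unfolding V7 F7_E_eq by simp
  have E4: "{f 3, f 4, f 7} \<in> E0 m" using iff[rule_format, of "{3,4,7}"] unfolding V7 F7_E_eq by simp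
  have dist: "f i \<noteq> f j" if "i \<in> F7_V" "j \<in> F7_V" "i \<noteq> j" for i j
    using inj that by (meson inj_on_contraD)
  have d: "f 1 \<noteq> f 2" "f 1 \<noteq> f 3" "f 2 \<noteq> f 3" "f 1 \<noteq> f 4" "f 2 \<noteq> f 4" "f 3 \<noteq> f 4"
    using dist unfolding V7 by auto
  define c where "c i = f i div m" for i
  have c: "c 1 \<noteq> c 2" "c 1 \<noteq> c 3" "c 2 \<noteq> c 3" "c 1 \<noteq> c 4" "c 2 \<noteq> c 4" "c 3 \<noteq> c 4"
    unfolding c_def
    by (metis sc[OF E1, of "f 1" "f 2"] sc[OF E1, of "f 1" "f 3"] sc[OF E1, of "f 2" "f 3"]
      sc[OF E2, of "f 1" "f 4"] sc[OF E3, of "f 2" "f 4"] sc[OF E4, of "f 3" "f 4"] d insertCI)+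
  have l: "c 1 < 3" "c 2 < 3" "c 3 < 3" "c 4 < 3"
    using cl3 cl[OF E1] cl[OF E2] unfolding c_def by auto
  show False using c l by linarith
qed

end

lemma empty_no_copy: "\<not> induced_copy V {} VH EH" if "e0 \<subseteq> VH" "e0 \<in> EH"
  using that unfolding induced_copy_def by blast

theorem theorem15:
  shows "(\<forall>(V::'a set) E. hyp3 V E \<longrightarrow> linear_hyp E \<longrightarrow>
            \<not> induced_copy V E W3_V W3_E \<longrightarrow> \<not> induced_copy V E F7_V F7_E \<longrightarrow>
            real (card E) \<le> real (card V) ^ 2 / 9)
       \<and> (\<forall>n. real (ex_lin_ind n {(W3_V, W3_E), (F7_V, F7_E)}) \<le> real n ^ 2 / 9)
       \<and> infinite {n. real (ex_lin_ind n {(W3_V, W3_E), (F7_V, F7_E)}) = real n ^ 2 / 9}"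
proof (intro conjI allI impI)
  fix V :: "'a set" and E
  assume "hyp3 V E" "linear_hyp E" "\<not> induced_copy V E W3_V W3_E" "\<not> induced_copy V E F7_V F7_E"
  then show "real (card E) \<le> real (card V) ^ 2 / 9" by (rule part1)
next
  define Sn where "Sn n = {card E | E. hyp3 {..<n} E \<and> linear_hyp E \<and>
       (\<forall>(VH, EH)\<in>{(W3_V, W3_E), (F7_V, F7_E)}. \<not> induced_copy {..<n} (E::nat set set) VH EH)}" for n :: nat
  have exS: "ex_lin_ind n {(W3_V, W3_E), (F7_V, F7_E)} = Max (Sn n)" for n
    unfolding ex_lin_ind_def Sn_def by simp
  have memS: "x \<in> Sn n \<longleftrightarrow> (\<exists>E. x = card E \<and> hyp3 {..<n} E \<and> linear_hyp E \<and>
      \<not> induced_copy {..<n} E W3_V W3_E \<and> \<not> induced_copy {..<n} E F7_V F7_E)" for x n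
    unfolding Sn_def by auto
  have finS: "finite (Sn n)" for n
  proof -
    have "Sn n \<subseteq> card ` Pow (Pow {..<n})"
    proof
      fix x assume "x \<in> Sn n"
      then obtain E where "x = card E" "hyp3 {..<n} E" using memS by blast
      then show "x \<in> card ` Pow (Pow {..<n})" unfolding hyp3_def by auto
    qed
    then show ?thesis by (rule finite_subset) simp
  qed
  have neS: "0 \<in> Sn n" for n
  proof -
    have "hyp3 {..<n} ({}::nat set set)" "linear_hyp ({}::nat set set)"
      unfolding hyp3_def linear_hyp_def by simp_all
    moreover have "\<not> induced_copy {..<n} {} W3_V W3_E"
      by (rule empty_no_copy[of "{1,2,3}"]) (auto simp: W3_V_def W3_E_def)
    moreover have "\<not> induced_copy {..<n} {} F7_V F7_E"
      by (rule empty_no_copy[of "{1,2,3}"]) (auto simp: F7_V_def F7_E_eq)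
    ultimately show ?thesis unfolding memS by force
  qed
  have P2: "real (Max (Sn n)) \<le> real n ^ 2 / 9" for n
  proof -
    have "Max (Sn n) \<in> Sn n" using Max_in[OF finS] neS by blast
    then obtain E where E: "Max (Sn n) = card E" "hyp3 {..<n} E" "linear_hyp E"
      "\<not> induced_copy {..<n} E W3_V W3_E" "\<not> induced_copy {..<n} E F7_V F7_E"
      using memS by blast
    have "real (card E) \<le> real (card {..<n}) ^ 2 / 9" by (rule part1[OF E(2-5)])
    then show ?thesis using E(1) by simp
  qed
  fix n
  show "real (ex_lin_ind n {(W3_V, W3_E), (F7_V, F7_E)}) \<le> real n ^ 2 / 9"
    unfolding exS by (rule P2)
next
  define Sn where "Sn n = {card E | E. hyp3 {..<n} E \<and> linear_hyp E \<and>
       (\<forall>(VH, EH)\<in>{(W3_V, W3_E), (F7_V, F7_E)}. \<not> induced_copy {..<n} (E::nat set set) VH EH)}" for n :: nat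
  have exS: "ex_lin_ind n {(W3_V, W3_E), (F7_V, F7_E)} = Max (Sn n)" for n
    unfolding ex_lin_ind_def Sn_def by simp
  have memS: "x \<in> Sn n \<longleftrightarrow> (\<exists>E. x = card E \<and> hyp3 {..<n} E \<and> linear_hyp E \<and>
      \<not> induced_copy {..<n} E W3_V W3_E \<and> \<not> induced_copy {..<n} E F7_V F7_E)" for x n
    unfolding Sn_def by auto
  have finS: "finite (Sn n)" for n
  proof -
    have "Sn n \<subseteq> card ` Pow (Pow {..<n})"
    proof
      fix x assume "x \<in> Sn n"
      then obtain E where "x = card E" "hyp3 {..<n} E" using memS by blast
      then show "x \<in> card ` Pow (Pow {..<n})" unfolding hyp3_def by auto
    qed
    then show ?thesis by (rule finite_subset) simp
  qed
  have eq: "real (ex_lin_ind (3 * 2^k) {(W3_V, W3_E), (F7_V, F7_E)}) = real (3 * 2^k) ^ 2 / 9" for k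
  proof -
    define m :: nat where "m = 2^k"
    have mk: "m = 2^k" by (simp add: m_def)
    have inS: "card (E0 m) \<in> Sn (3*m)" unfolding memS
      using E0_hyp3[OF mk] E0_lin[OF mk] E0_noW[OF mk] E0_noF[OF mk] by blast
    have ge: "m^2 \<le> Max (Sn (3*m))" using Max_ge[OF finS inS] E0_card[OF mk] by simp
    have le: "real (Max (Sn (3*m))) \<le> real (3*m) ^ 2 / 9"
    proof -
      have "Max (Sn (3*m)) \<in> Sn (3*m)" using Max_in[OF finS] inS by blast
      then obtain E where E: "Max (Sn (3*m)) = card E" "hyp3 {..<3*m} E" "linear_hyp E"
        "\<not> induced_copy {..<3*m} E W3_V W3_E" "\<not> induced_copy {..<3*m} E F7_V F7_E"
        using memS by blast
      have "real (card E) \<le> real (card {..<3*m}) ^ 2 / 9" by (rule part1[OF E(2-5)])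
      then show ?thesis using E(1) by simp
    qed
    have "real (3*m) ^ 2 / 9 = real (m^2)" by (simp add: power2_eq_square)
    then have "real (Max (Sn (3*m))) = real (3*m) ^ 2 / 9"
      using le ge by (metis of_nat_le_iff antisym)
    then show ?thesis unfolding exS m_def .
  qed
  show "infinite {n. real (ex_lin_ind n {(W3_V, W3_E), (F7_V, F7_E)}) = real n ^ 2 / 9}"
  proof
    assume "finite {n. real (ex_lin_ind n {(W3_V, W3_E), (F7_V, F7_E)}) = real n ^ 2 / 9}"
    then obtain B where B: "\<forall>n\<in>{n. real (ex_lin_ind n {(W3_V, W3_E), (F7_V, F7_E)}) = real n ^ 2 / 9}. n < B"
      unfolding finite_nat_set_iff_bounded by blast
    have "3 * 2^B < B" using B eq[of B] by blast
    moreover have "B < 2^B" by (rule less_exp)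
    ultimately show False by simp
  qed
qed

end
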